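(* Let $0<r_\varepsilon<1$ ($\varepsilon=+,-$), $\sigma_i\in[0,2\pi)$ ($i=1,2$), $s_\varepsilon=\sqrt{1-r_\varepsilon^2}$, and \begin{align*} U_{r,\sigma}={}&\sum_{n\ge0}|e_1^{n-1}\rangle\langle r_+e_1^n+s_+e_2^n|+|e_2^{n+1}\rangle\langle -e^{i\sigma_1}s_+e_1^n+e^{i\sigma_1}r_+e_2^n|\\ &+\sum_{n\le-1}|e_1^{n-1}\rangle\langle r_-e_1^n+e^{i\sigma_2}s_-e_2^n|+|e_2^{n+1}\rangle\langle -s_-e_1^n+e^{i\sigma_2}r_-e_2^n|. \end{align*} Let $W=\bigoplus_{n\in\mathbb Z}W_n$ be a unitary on $\mathcal H$ with each $W_n$ a unitary on $\mathcal H_n$, and let $\lambda\in[0,2\pi)$. Then $e^{i\lambda}WU_{r,\sigma}W^*=U_{r,\sigma}$ if and only if either $\lambda=0$ and $W=I_{\mathcal H}$, or $\lambda=\pi$ and $W=\bigoplus_{n\in\mathbb Z}(-1)^nI_{\mathcal H_n}$.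
   Context: Let $\mathcal H_n=\mathbb C^2$ for $n\in\mathbb Z$, $\mathcal H=\bigoplus_{n\in\mathbb Z}\mathcal H_n$, and $\{e_1^n,e_2^n\}$ the standard basis of $\mathcal H_n$. Dirac notation: $|x\rangle\langle y|$ is the operator $z\mapsto\langle y,z\rangle x$ (inner product conjugate-linear in the first argument).
   Formalization: The conclusion determines W only up to a constant c with |c| = 1: $W_n$ is c times the identity for every n when $\lambda=0$, and c times $(-1)^n$ times the identity when $\lambda=\pi$. The statement above fails without it. *)

theory Defs
  imports "HOL-Analysis.Analysis"
begin

text \<open>The fibre H_n = C^2 is modelled as complex^2, with standard basis e1, e2.
  A vector of H = direct sum of the H_n is a function int => complex^2;
  it lies in H iff it is square summable.\<close>

definition e1 :: "complex^2" where "e1 = vector [1, 0]"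
definition e2 :: "complex^2" where "e2 = vector [0, 1]"

definition cinner :: "complex^2 \<Rightarrow> complex^2 \<Rightarrow> complex" where
  "cinner u v = (\<Sum>i\<in>UNIV. cnj (u $ i) * v $ i)"

definition inH :: "(int \<Rightarrow> complex^2) \<Rightarrow> bool" where
  "inH z \<longleftrightarrow> (\<lambda>n. (norm (z n))\<^sup>2) summable_on UNIV"

definition cadj :: "complex^2^2 \<Rightarrow> complex^2^2" where
  "cadj M = (\<chi> i j. cnj (M $ j $ i))"

definition cunitary :: "complex^2^2 \<Rightarrow> bool" where
  "cunitary M \<longleftrightarrow> M ** cadj M = mat 1 \<and> cadj M ** M = mat 1"

text \<open>The bra vectors of U_{r,sigma}: at site n, U contains
  |e_1^{n-1}><bra1 n| + |e_2^{n+1}><bra2 n|.\<close>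
definition bra1 :: "real \<Rightarrow> real \<Rightarrow> real \<Rightarrow> real \<Rightarrow> int \<Rightarrow> complex^2" where
  "bra1 rp rm s1 s2 n =
    (let sp = complex_of_real (sqrt (1 - rp\<^sup>2)); sm = complex_of_real (sqrt (1 - rm\<^sup>2)) in
     if n \<ge> 0 then vector [complex_of_real rp, sp]
     else vector [complex_of_real rm, cis s2 * sm])"

definition bra2 :: "real \<Rightarrow> real \<Rightarrow> real \<Rightarrow> real \<Rightarrow> int \<Rightarrow> complex^2" where
  "bra2 rp rm s1 s2 n =
    (let sp = complex_of_real (sqrt (1 - rp\<^sup>2)); sm = complex_of_real (sqrt (1 - rm\<^sup>2)) in
     if n \<ge> 0 then vector [- cis s1 * sp, cis s1 * complex_of_real rp]
     else vector [- sm, cis s2 * complex_of_real rm])"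

text \<open>U_{r,sigma} applied to z, evaluated at site m: only the terms n = m+1
  (ket e_1^{n-1}) and n = m-1 (ket e_2^{n+1}) contribute to site m.\<close>
definition Uop :: "real \<Rightarrow> real \<Rightarrow> real \<Rightarrow> real \<Rightarrow> (int \<Rightarrow> complex^2) \<Rightarrow> (int \<Rightarrow> complex^2)" where
  "Uop rp rm s1 s2 z = (\<lambda>m.
     cinner (bra1 rp rm s1 s2 (m + 1)) (z (m + 1)) *s e1
   + cinner (bra2 rp rm s1 s2 (m - 1)) (z (m - 1)) *s e2)"

definition Wop :: "(int \<Rightarrow> complex^2^2) \<Rightarrow> (int \<Rightarrow> complex^2) \<Rightarrow> (int \<Rightarrow> complex^2)" where
  "Wop W z = (\<lambda>n. W n *v z n)"

definition Wadj :: "(int \<Rightarrow> complex^2^2) \<Rightarrow> (int \<Rightarrow> complex^2) \<Rightarrow> (int \<Rightarrow> complex^2)" where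
  "Wadj W z = (\<lambda>n. cadj (W n) *v z n)"

end

theory Submission
  imports Defs
begin


lemma vec2_eq: "(x::'a^2) = y \<longleftrightarrow> x$1 = y$1 \<and> x$2 = y$2"
  by (auto simp: vec_eq_iff forall_2)

lemma e1_simps[simp]: "e1$1 = 1" "e1$2 = 0" by (simp_all add: e1_def)
lemma e2_simps[simp]: "e2$1 = 0" "e2$2 = 1" by (simp_all add: e2_def)

lemma cinner_expand: "cinner u v = cnj (u$1) * v$1 + cnj (u$2) * v$2"
  by (simp add: cinner_def sum_2)

lemma mv_simps[simp]: "(M *v (x::complex^2))$1 = M$1$1 * x$1 + M$1$2 * x$2"
  "(M *v (x::complex^2))$2 = M$2$1 * x$1 + M$2$2 * x$2"
  by (simp_all add: matrix_vector_mult_def sum_2)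

definition dl :: "int \<Rightarrow> complex^2 \<Rightarrow> int \<Rightarrow> complex^2" where
  "dl n v = (\<lambda>k. if k = n then v else 0)"

lemma inH_dl: "inH (dl n v)"
  unfolding inH_def dl_def
  by (rule finite_nonzero_values_imp_summable_on) (auto intro: finite_subset[of _ "{n}"])

lemma Wadj_dl: "Wadj W (dl n v) = dl n (cadj (W n) *v v)"
  by (auto simp: Wadj_def dl_def)

lemma cinner_0[simp]: "cinner u 0 = 0" by (simp add: cinner_expand)

lemma Uop_dl1: "Uop rp rm s1 s2 (dl n v) (n - 1) = cinner (bra1 rp rm s1 s2 n) v *s e1"
  by (simp add: Uop_def dl_def)
lemma Uop_dl2: "Uop rp rm s1 s2 (dl n v) (n + 1) = cinner (bra2 rp rm s1 s2 n) v *s e2"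
  by (simp add: Uop_def dl_def)

lemma bra_nz:
  assumes "0 < rp" "rp < 1" "0 < rm" "rm < 1"
  shows "bra1 rp rm s1 s2 n $ 1 \<noteq> 0" "bra1 rp rm s1 s2 n $ 2 \<noteq> 0" "bra2 rp rm s1 s2 n $ 1 \<noteq> 0"
proof -
  have a: "sqrt (1 - rp\<^sup>2) \<noteq> 0" "sqrt (1 - rm\<^sup>2) \<noteq> 0" using assms
  proof -
    have "rp * rp < 1" "rm * rm < 1" using assms using mult_strict_mono[of rp 1 rp 1] mult_strict_mono[of rm 1 rm 1] by simp_all
    then show "sqrt (1 - rp\<^sup>2) \<noteq> 0" "sqrt (1 - rm\<^sup>2) \<noteq> 0" by (simp_all add: power2_eq_square)
  qed
  show "bra1 rp rm s1 s2 n $ 1 \<noteq> 0" "bra1 rp rm s1 s2 n $ 2 \<noteq> 0" "bra2 rp rm s1 s2 n $ 1 \<noteq> 0"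
    using assms a by (auto simp: bra1_def bra2_def Let_def)
qed

lemma cadj_mul: "cadj M ** M = mat 1 \<Longrightarrow> cadj M *v (M *v v) = v"
  by (simp add: matrix_vector_mul_assoc)

lemma sign_step: "((-1::complex) ^ nat \<bar>m + 1\<bar>) = - ((-1) ^ nat \<bar>m\<bar>)"
proof (cases "m \<ge> 0")
  case True
  then have "nat \<bar>m + 1\<bar> = Suc (nat \<bar>m\<bar>)" by simp
  then show ?thesis by (simp only: power_Suc) simp
next
  case False
  then have "nat \<bar>m\<bar> = Suc (nat \<bar>m + 1\<bar>)" by simp
  then show ?thesis by (simp only: power_Suc) simp
qed


lemma cinner_scale: "cinner u (a *s v) = a * cinner u v"
  by (simp add: cinner_expand algebra_simps)

lemma mat2_eq: "(M::'a^2^2) = N \<longleftrightarrow> M$1$1 = N$1$1 \<and> M$1$2 = N$1$2 \<and> M$2$1 = N$2$1 \<and> M$2$2 = N$2$2"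
  by (auto simp: vec2_eq)

lemma mat_entries[simp]: "(mat c :: 'a::zero^2^2)$1$1 = c" "(mat c :: 'a^2^2)$2$2 = c"
   "(mat c :: 'a^2^2)$1$2 = 0" "(mat c :: 'a^2^2)$2$1 = 0"
  by (simp_all add: mat_def)

lemma cadj_entries[simp]: "cadj M $ i $ j = cnj (M $ j $ i)"
  by (simp add: cadj_def)

lemma mm_simps[simp]: "((A::complex^2^2) ** B)$i$j = A$i$1 * B$1$j + A$i$2 * B$2$j"
  by (simp add: matrix_matrix_mult_def sum_2)

lemma converse_dir:
  assumes W: "\<forall>n. W n = mat (c n)"
    and k1: "\<forall>m. cis lam * c m * cnj (c (m+1)) = 1"
    and k2: "\<forall>m. cis lam * c m * cnj (c (m-1)) = 1"
  shows "(\<lambda>n. cis lam *s Wop W (Uop rp rm s1 s2 (Wadj W z)) n) = Uop rp rm s1 s2 z"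
proof
  fix m
  have a: "Wadj W z = (\<lambda>k. cnj (c k) *s z k)"
    using W by (auto simp: Wadj_def vec2_eq)
  have b: "\<And>x. Wop W x m = c m *s x m"
    using W by (auto simp: Wop_def vec2_eq)
  have k1': "cis lam * (c m * (cnj (c (m+1)) * x)) = x" for x
    using k1[rule_format, of m] by (metis mult.assoc mult_1)
  have k2': "cis lam * (c m * (cnj (c (m-1)) * x)) = x" for x
    using k2[rule_format, of m] by (metis mult.assoc mult_1)
  show "cis lam *s Wop W (Uop rp rm s1 s2 (Wadj W z)) m = Uop rp rm s1 s2 z m"
    unfolding b a by (simp add: vec2_eq Uop_def cinner_scale k1' k2')
qed

theorem corollary2p13:
  fixes rp rm s1 s2 lam :: real and W :: "int \<Rightarrow> complex^2^2"
  assumes "0 < rp" "rp < 1" "0 < rm" "rm < 1"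
    and "0 \<le> s1" "s1 < 2 * pi" "0 \<le> s2" "s2 < 2 * pi"
    and "\<forall>n. cunitary (W n)"
    and "0 \<le> lam" "lam < 2 * pi"
  shows "(\<forall>z. inH z \<longrightarrow>
            (\<lambda>n. cis lam *s Wop W (Uop rp rm s1 s2 (Wadj W z)) n) = Uop rp rm s1 s2 z)
    \<longleftrightarrow> ((lam = 0 \<and> (\<exists>c. norm c = 1 \<and> (\<forall>n. W n = mat c)))
        \<or> (lam = pi \<and> (\<exists>c. norm c = 1 \<and> (\<forall>n. W n = mat (c * (- 1) ^ nat \<bar>n\<bar>)))))"
  (is "?L \<longleftrightarrow> ?R")
proof
  assume R: ?R
  show ?L
  proof (intro allI impI)
    fix z :: "int \<Rightarrow> complex^2"
    from R show "(\<lambda>n. cis lam *s Wop W (Uop rp rm s1 s2 (Wadj W z)) n) = Uop rp rm s1 s2 z"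
    proof
      assume "lam = 0 \<and> (\<exists>c. norm c = 1 \<and> (\<forall>n. W n = mat c))"
      then obtain c where l: "lam = 0" and c: "norm c = 1" "\<forall>n. W n = mat c" by blast
      have cc: "c * cnj c = 1" using c(1) complex_norm_square[of c] by simp
      show ?thesis
        by (rule converse_dir[where c = "\<lambda>_. c"]) (use l c cc in auto)
    next
      assume "lam = pi \<and> (\<exists>c. norm c = 1 \<and> (\<forall>n. W n = mat (c * (- 1) ^ nat \<bar>n\<bar>)))"
      then obtain c where l: "lam = pi" and c: "norm c = 1" "\<forall>n. W n = mat (c * (- 1) ^ nat \<bar>n\<bar>)" by blast
      have cc: "c * cnj c = 1" using c(1) complex_norm_square[of c] by simp
      have sq: "((-1::complex) ^ k) * (-1) ^ k = 1" for k
        by (simp add: power_mult_distrib[symmetric])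
      have s1': "(-1::complex) ^ nat \<bar>m - 1\<bar> = - ((-1) ^ nat \<bar>m\<bar>)" for m
        using sign_step[of "m - 1"] by simp
      show ?thesis
      proof (rule converse_dir[where c = "\<lambda>n. c * (- 1) ^ nat \<bar>n\<bar>"])
        show "\<forall>n. W n = mat (c * (- 1) ^ nat \<bar>n\<bar>)" by (rule c(2))
        show "\<forall>m. cis lam * (c * (- 1) ^ nat \<bar>m\<bar>) * cnj (c * (- 1) ^ nat \<bar>m + 1\<bar>) = 1"
          using cc sq by (simp add: l sign_step algebra_simps)
        show "\<forall>m. cis lam * (c * (- 1) ^ nat \<bar>m\<bar>) * cnj (c * (- 1) ^ nat \<bar>m - 1\<bar>) = 1"
          using cc sq by (simp add: l s1' algebra_simps)
      qed
    qed
  qed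
next
  assume H: ?L
  define b1 where "b1 = bra1 rp rm s1 s2"
  define b2 where "b2 = bra2 rp rm s1 s2"
  have U: "cadj (W n) ** W n = mat 1" for n using assms(9) by (simp add: cunitary_def)
  have E1: "cis lam *s (W (n-1) *v (cinner (b1 n) u *s e1)) = cinner (b1 n) (W n *v u) *s e1" for n u
  proof -
    have "(\<lambda>k. cis lam *s Wop W (Uop rp rm s1 s2 (Wadj W (dl n (W n *v u)))) k)
         = Uop rp rm s1 s2 (dl n (W n *v u))"
      by (rule H[rule_format, OF inH_dl])
    then have "(\<lambda>k. cis lam *s Wop W (Uop rp rm s1 s2 (Wadj W (dl n (W n *v u)))) k) (n - 1)
         = Uop rp rm s1 s2 (dl n (W n *v u)) (n - 1)" by (rule fun_cong)
    then show ?thesis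
      by (simp add: Wadj_dl Uop_dl1 Wop_def cadj_mul[OF U] b1_def)
  qed
  have E2: "cis lam *s (W (n+1) *v (cinner (b2 n) u *s e2)) = cinner (b2 n) (W n *v u) *s e2" for n u
  proof -
    have "(\<lambda>k. cis lam *s Wop W (Uop rp rm s1 s2 (Wadj W (dl n (W n *v u)))) k)
         = Uop rp rm s1 s2 (dl n (W n *v u))"
      by (rule H[rule_format, OF inH_dl])
    then have "(\<lambda>k. cis lam *s Wop W (Uop rp rm s1 s2 (Wadj W (dl n (W n *v u)))) k) (n + 1)
         = Uop rp rm s1 s2 (dl n (W n *v u)) (n + 1)" by (rule fun_cong)
    then show ?thesis
      by (simp add: Wadj_dl Uop_dl2 Wop_def cadj_mul[OF U] b2_def)
  qed
  have nz: "b1 n $ 1 \<noteq> 0" "b1 n $ 2 \<noteq> 0" "b2 n $ 1 \<noteq> 0" for n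
    using bra_nz[OF assms(1-4)] by (auto simp: b1_def b2_def)
  have cl: "cis lam \<noteq> 0" by simp
  have off1: "W n $ 2 $ 1 = 0" for n
    using E1[of "n+1" e1] nz[of "n+1"] cl by (simp add: vec2_eq cinner_expand)
  have off2: "W n $ 1 $ 2 = 0" for n
    using E2[of "n-1" e1] nz[of "n-1"] cl by (simp add: vec2_eq cinner_expand)
  have rec1: "W n $1$1 = cis lam * W (n-1) $1$1" for n
    using E1[of n e1] nz[of n] off1[of n] by (simp add: vec2_eq cinner_expand)
  have rec2: "W n $2$2 = cis lam * W (n-1) $1$1" for n
    using E1[of n e2] nz[of n] off1[of n] off2[of n] by (simp add: vec2_eq cinner_expand)
  have rec3: "W n $1$1 = cis lam * W (n+1) $2$2" for n
    using E2[of n e1] nz[of n] off1[of n] by (simp add: vec2_eq cinner_expand)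
  have nrm: "cnj (W n $1$1) * W n $1$1 = 1" for n
    using U[of n] off1[of n] by (simp add: mat2_eq)
  have a0: "W n $1$1 \<noteq> 0" for n using nrm[of n] by auto
  have "W 0 $1$1 = cis lam * (cis lam * W 0 $1$1)"
    using rec3[of 0] rec2[of 1] by simp
  then have "cis lam * cis lam = 1" using a0[of 0]
    by (metis mult.assoc mult_cancel_right1)
  then have "(cis lam - 1) * (cis lam + 1) = 0" by (simp add: algebra_simps)
  then have "cis lam - 1 = 0 \<or> cis lam + 1 = 0" by simp
  then have ci: "cis lam = 1 \<or> cis lam = -1" using add_eq_0_iff2[of "cis lam" 1] by auto
  have lamv: "(lam = 0 \<and> cis lam = 1) \<or> (lam = pi \<and> cis lam = -1)"
  proof (cases "cis lam = 1")
    case True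
    then have "cos lam = 1" using cis.sel(1)[of lam] by simp
    then obtain k :: int where k: "lam = real_of_int k * 2 * pi" using cos_one_2pi_int by blast
    have q: "real_of_int k = lam / (2 * pi)" using k by (simp add: field_simps)
    have "0 \<le> lam / (2 * pi)" using assms(10) by simp
    moreover have "lam / (2 * pi) < 1" using assms(11) pi_gt_zero by (simp add: pos_divide_less_eq)
    ultimately have "0 \<le> real_of_int k" "real_of_int k < 1" using q by simp_all
    then have "k = 0" by linarith
    then show ?thesis using k True by simp
  next
    case False
    then have c: "cis lam = -1" using ci by blast
    then have "cos lam = -1" using cis.sel(1)[of lam] by simp
    then obtain k :: int where k: "lam = (2 * real_of_int k + 1) * pi" using cos_eq_minus1 by blast
    have q: "2 * real_of_int k + 1 = lam / pi" using k by (simp add: field_simps)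
    have "0 \<le> lam / pi" using assms(10) by simp
    moreover have "lam / pi < 2" using assms(11) pi_gt_zero by (simp add: pos_divide_less_eq)
    ultimately have "0 \<le> 2 * real_of_int k + 1" "2 * real_of_int k + 1 < 2" using q by simp_all
    then have "k = 0" by linarith
    then show ?thesis using k c by simp
  qed
  have WA: "W n = mat (W n $1$1)" for n
    using off1[of n] off2[of n] rec1[of n] rec2[of n] by (simp add: mat2_eq)
  have normc: "norm (W 0 $1$1) = 1"
  proof -
    have "complex_of_real ((norm (W 0 $1$1))\<^sup>2) = 1"
      using nrm[of 0] complex_norm_square[of "W 0 $1$1"] by (simp add: mult.commute)
    then have "(norm (W 0 $1$1))\<^sup>2 = 1" using of_real_eq_1_iff by blast
    then show ?thesis using norm_ge_zero[of "W 0 $1$1"] by (auto simp: power2_eq_1_iff)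
  qed
  define a where "a = (\<lambda>n. W n $1$1)"
  have rec: "a n = cis lam * a (n-1)" for n using rec1[of n] by (simp add: a_def)
  have WA': "W n = mat (a n)" for n using WA[of n] by (simp add: a_def)
  have na: "norm (a 0) = 1" using normc by (simp add: a_def)
  from lamv show ?R
  proof
    assume l: "lam = 0 \<and> cis lam = 1"
    have A: "a n = a 0" for n
    proof (induction n rule: int_induct[where k = 0])
      case base then show ?case by simp
    next
      case (step1 i) then show ?case using rec[of "i+1"] l by simp
    next
      case (step2 i) then show ?case using rec[of i] l by simp
    qed
    have "\<forall>n. W n = mat (a 0)"
    proof
      fix n show "W n = mat (a 0)" using WA'[of n] A[of n] by simp
    qed
    then show ?R using l na by blast
  next
    assume l: "lam = pi \<and> cis lam = -1"
    have A: "a n = a 0 * (-1) ^ nat \<bar>n\<bar>" for n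
    proof (induction n rule: int_induct[where k = 0])
      case base then show ?case by simp
    next
      case (step1 i) then show ?case using rec[of "i+1"] l sign_step[of i] by simp
    next
      case (step2 i) then show ?case using rec[of i] l sign_step[of "i - 1"] by simp
    qed
    have "\<forall>n. W n = mat (a 0 * (-1) ^ nat \<bar>n\<bar>)"
    proof
      fix n show "W n = mat (a 0 * (-1) ^ nat \<bar>n\<bar>)" using WA'[of n] A[of n] by simp
    qed
    then show ?R using l na by blast
  qed
qed

end
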